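(* Let $X$ be a strictly convex complex Banach space and let $J:X\to X^*$ be any duality section of $X$. Let $x\in X$ be a unit vector and let $T=\{e^{tA}:t\ge 0\}$ be a $(C_0)$ contraction semigroup with generator $A$ such that \[\lim_{t\to\infty}|\langle T(t)x,J(x)\rangle| = 1.\] Then $x$ is in the domain of $A$ and $Ax=i\lambda x$ for some real number $\lambda$; i.e. $x$ is an eigenvector of $A$ corresponding to a purely imaginary eigenvalue.
   Context: For a complex Banach space $X$, a functional $x^*\in X^*$ is called dual to $x\in X$ if $\langle x,x^*\rangle = \|x^*\|\|x\| = \|x^*\|^2=\|x\|^2$. A map $J:X\to X^*$ is a duality section if $J(x)$ is dual to $x$ for every $x\in X$. $X$ is strictly convex if for any two unit vectors $x,y$, either $x=y$ or $\|x+y\|<2$. *)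

theory Defs
  imports "HOL-Analysis.Analysis"
begin

text \<open>A complex Banach space is modelled as a real Banach space (type class banach)
together with a complex structure ci (multiplication by the imaginary unit),
which is real-linear, squares to minus the identity, and is compatible with the
norm: the norm of (a + i b) x equals |a + i b| times the norm of x.\<close>

definition complex_structure :: "('a::real_normed_vector \<Rightarrow> 'a) \<Rightarrow> bool" where
  "complex_structure ci \<longleftrightarrow> linear ci \<and> (\<forall>x. ci (ci x) = - x) \<and>
     (\<forall>a b x. norm (a *\<^sub>R x + b *\<^sub>R ci x) = cmod (Complex a b) * norm x)"

definition cscale :: "('a::real_normed_vector \<Rightarrow> 'a) \<Rightarrow> complex \<Rightarrow> 'a \<Rightarrow> 'a" where
  "cscale ci z x = Re z *\<^sub>R x + Im z *\<^sub>R ci x"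

definition complex_bounded_linear ::
  "('a::real_normed_vector \<Rightarrow> 'a) \<Rightarrow> ('a \<Rightarrow> 'a) \<Rightarrow> bool" where
  "complex_bounded_linear ci L \<longleftrightarrow> bounded_linear L \<and> (\<forall>x. L (ci x) = ci (L x))"

definition dual_functional :: "('a::real_normed_vector \<Rightarrow> 'a) \<Rightarrow> ('a \<Rightarrow> complex) \<Rightarrow> bool" where
  "dual_functional ci f \<longleftrightarrow> bounded_linear f \<and> (\<forall>x. f (ci x) = \<i> * f x)"

definition is_dual_to :: "('a::real_normed_vector \<Rightarrow> 'a) \<Rightarrow> ('a \<Rightarrow> complex) \<Rightarrow> 'a \<Rightarrow> bool" where
  "is_dual_to ci f x \<longleftrightarrow> dual_functional ci f \<and>
     f x = complex_of_real (onorm f * norm x) \<and>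
     onorm f * norm x = (onorm f)\<^sup>2 \<and> (onorm f)\<^sup>2 = (norm x)\<^sup>2"

definition duality_section :: "('a::real_normed_vector \<Rightarrow> 'a) \<Rightarrow> ('a \<Rightarrow> 'a \<Rightarrow> complex) \<Rightarrow> bool" where
  "duality_section ci J \<longleftrightarrow> (\<forall>x. is_dual_to ci (J x) x)"

definition strictly_convex :: "'a::real_normed_vector itself \<Rightarrow> bool" where
  "strictly_convex _ \<longleftrightarrow> (\<forall>x y::'a. norm x = 1 \<longrightarrow> norm y = 1 \<longrightarrow> x \<noteq> y \<longrightarrow> norm (x + y) < 2)"

definition C0_contraction_semigroup ::
  "('a::real_normed_vector \<Rightarrow> 'a) \<Rightarrow> (real \<Rightarrow> 'a \<Rightarrow> 'a) \<Rightarrow> bool" where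
  "C0_contraction_semigroup ci T \<longleftrightarrow>
     (\<forall>t\<ge>0. complex_bounded_linear ci (T t)) \<and>
     T 0 = id \<and>
     (\<forall>s\<ge>0. \<forall>t\<ge>0. T (s + t) = T s \<circ> T t) \<and>
     (\<forall>x. ((\<lambda>t. T t x) \<longlongrightarrow> x) (at_right 0)) \<and>
     (\<forall>t\<ge>0. onorm (T t) \<le> 1)"

text \<open>Graph of the generator A: x \<in> D(A) and A x = y.\<close>
definition generator_graph :: "(real \<Rightarrow> 'a::real_normed_vector \<Rightarrow> 'a) \<Rightarrow> 'a \<Rightarrow> 'a \<Rightarrow> bool" where
  "generator_graph T x y \<longleftrightarrow> ((\<lambda>h. inverse h *\<^sub>R (T h x - x)) \<longlongrightarrow> y) (at_right 0)"

end

theory Submission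
  imports Defs
begin
lemma cont_phi:
  fixes \<phi> :: "real \<Rightarrow> complex"
  assumes mult: "\<And>s t. s\<ge>0 \<Longrightarrow> t\<ge>0 \<Longrightarrow> \<phi>(s+t) = \<phi> s * \<phi> t"
    and nz: "\<And>s. s\<ge>0 \<Longrightarrow> \<phi> s \<noteq> 0"
    and lim: "(\<phi> \<longlongrightarrow> 1) (at_right 0)"
  shows "continuous_on {0..} \<phi>"
proof -
  have R: "(\<phi> \<longlongrightarrow> \<phi> t) (at_right t)" if "t \<ge> 0" for t
  proof -
    have "((\<lambda>h. \<phi> h * \<phi> t) \<longlongrightarrow> 1 * \<phi> t) (at_right 0)" by (intro tendsto_mult lim tendsto_const)
    moreover have "eventually (\<lambda>h. \<phi> h * \<phi> t = \<phi> (h + t)) (at_right 0)"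
      using eventually_at_right_less[of "0::real"] by eventually_elim (use that mult in auto)
    ultimately have "((\<lambda>h. \<phi> (h + t)) \<longlongrightarrow> \<phi> t) (at_right 0)"
      by (simp add: tendsto_cong)
    then show ?thesis by (simp add: filterlim_at_right_to_0[of _ _ t])
  qed
  have L: "(\<phi> \<longlongrightarrow> \<phi> t) (at_left t)" if "t > 0" for t
  proof -
    have "((\<lambda>h. \<phi> t / \<phi> h) \<longlongrightarrow> \<phi> t / 1) (at_right 0)" by (intro tendsto_divide lim tendsto_const) auto
    moreover have "eventually (\<lambda>h. 0 < h \<and> h < t) (at_right 0)"
      using eventually_at_right_less[of "0::real"] eventually_at_right[of 0 t] that
      by (auto intro: eventually_conj)
    then have "eventually (\<lambda>h. \<phi> t / \<phi> h = \<phi> (- (h + - t))) (at_right 0)"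
    proof eventually_elim
      case (elim h)
      then have "\<phi> t = \<phi> (t - h) * \<phi> h" using mult[of "t-h" h] by auto
      then show ?case using nz[of h] elim by (auto simp: field_simps)
    qed
    ultimately have "((\<lambda>h. \<phi> (- (h + - t))) \<longlongrightarrow> \<phi> t) (at_right 0)"
      by (simp add: tendsto_cong)
    then show ?thesis by (simp add: filterlim_at_left_to_right filterlim_at_right_to_0[of _ _ "-t"])
  qed
  show ?thesis unfolding continuous_on_def
  proof
    fix t :: real assume t: "t \<in> {0..}"
    show "(\<phi> \<longlongrightarrow> \<phi> t) (at t within {0..})"
    proof (cases "t = 0")
      case True then show ?thesis using R[of 0] by (simp add: at_within_Ici_at_right)
    next
      case False
      then have "(\<phi> \<longlongrightarrow> \<phi> t) (at t)" using R L t by (auto intro: filterlim_split_at)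
      then show ?thesis by (rule tendsto_mono[rotated]) (simp add: at_le)
    qed
  qed
qed

lemma vd_right:
  fixes F :: "real \<Rightarrow> complex"
  assumes "(F has_vector_derivative d) (at v within {a..b})" "a \<le> v" "v < b"
  shows "((\<lambda>h. (F (v+h) - F v) / of_real h) \<longlongrightarrow> d) (at_right 0)"
proof -
  have eq: "at_right v = at v within {v<..b}"
    by (rule at_within_nhd[of v "{..<b}"]) (use assms in auto)
  have le: "at_right v \<le> at v within {a..b}" unfolding eq using assms by (intro at_le) auto
  from assms(1) have "((\<lambda>y. ((F y - F v) - (y - v) *\<^sub>R d) /\<^sub>R norm (y - v)) \<longlongrightarrow> 0) (at v within {a..b})"
    unfolding has_vector_derivative_def has_derivative_at_within by auto
  then have "((\<lambda>y. ((F y - F v) - (y - v) *\<^sub>R d) /\<^sub>R norm (y - v)) \<longlongrightarrow> 0) (at_right v)"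
    using le tendsto_mono by blast
  then have "((\<lambda>y. ((F y - F v) - (y - v) *\<^sub>R d) /\<^sub>R norm (y - v) + d) \<longlongrightarrow> 0 + d) (at_right v)"
    by (intro tendsto_add tendsto_const)
  moreover have "eventually (\<lambda>y. ((F y - F v) - (y - v) *\<^sub>R d) /\<^sub>R norm (y - v) + d = (F y - F v) / of_real (y - v)) (at_right v)"
    using eventually_at_right_less[of v]
  proof eventually_elim
    case (elim y)
    then have "y - v \<noteq> 0" "norm (y - v) = y - v" by auto
    then show ?case by (simp add: scaleR_conv_of_real field_simps)
  qed
  ultimately have "((\<lambda>y. (F y - F v) / of_real (y - v)) \<longlongrightarrow> d) (at_right v)"
    by (simp add: tendsto_cong)
  then show ?thesis by (simp add: filterlim_at_right_to_0[of _ _ v] add.commute)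
qed

lemma mult_hom_deriv:
  fixes \<phi> :: "real \<Rightarrow> complex"
  assumes one: "\<phi> 0 = 1"
    and mult: "\<And>s t. s\<ge>0 \<Longrightarrow> t\<ge>0 \<Longrightarrow> \<phi>(s+t) = \<phi> s * \<phi> t"
    and unit: "\<And>s. s\<ge>0 \<Longrightarrow> norm (\<phi> s) = 1"
    and lim: "(\<phi> \<longlongrightarrow> 1) (at_right 0)"
  shows "\<exists>lam::real. ((\<lambda>h. (\<phi> h - 1) / of_real h) \<longlongrightarrow> \<i> * of_real lam) (at_right 0)"
proof -
  have nz: "\<And>s. s\<ge>0 \<Longrightarrow> \<phi> s \<noteq> 0" using unit by fastforce
  have cont: "continuous_on {0..} \<phi>" by (rule cont_phi[OF mult nz lim]) auto
  define \<Phi> where "\<Phi> u = integral {0..u} \<phi>" for u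
  have contI: "continuous_on {0..b} \<phi>" for b by (rule continuous_on_subset[OF cont]) auto
  have D: "(\<Phi> has_vector_derivative \<phi> v) (at v within {0..2})" if "v \<in> {0..2}" for v
    unfolding \<Phi>_def using integral_has_vector_derivative[OF contI that] .
  have P0: "\<Phi> 0 = 0" unfolding \<Phi>_def by simp
  have D0: "((\<lambda>h. (\<Phi> h - \<Phi> 0)/of_real h) \<longlongrightarrow> 1) (at_right 0)"
    using vd_right[OF D[of 0]] one by simp
  obtain \<delta> where \<delta>: "0 < \<delta>" "\<delta> \<le> 1" "\<Phi> \<delta> \<noteq> 0"
  proof -
    have "eventually (\<lambda>h. dist ((\<Phi> h - \<Phi> 0)/of_real h) 1 < 1) (at_right 0)"
      using tendsto_iff[THEN iffD1, OF D0, rule_format, of 1] by simp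
    then obtain b where b: "b > 0" "\<And>h. 0 < h \<Longrightarrow> h < b \<Longrightarrow> dist ((\<Phi> h - \<Phi> 0)/of_real h) 1 < 1"
      unfolding eventually_at_right_field by auto
    let ?d = "min (b/2) 1"
    have "dist ((\<Phi> ?d - \<Phi> 0)/of_real ?d) 1 < 1" using b by auto
    then have "\<Phi> ?d \<noteq> 0" using P0 by auto
    then show ?thesis using that[of ?d] b by auto
  qed
  define c where "c = \<Phi> \<delta>"
  have intg: "\<phi> integrable_on {a..b}" if "0 \<le> a" for a b
    by (rule integrable_continuous_interval, rule continuous_on_subset[OF cont]) (use that in auto)
  have shift: "\<Phi> (s+\<delta>) - \<Phi> s = \<phi> s * c" if s: "s \<ge> 0" for s
  proof -
    have "\<Phi> (s+\<delta>) = integral {0..s} \<phi> + integral {s..s+\<delta>} \<phi>"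
      unfolding \<Phi>_def using Henstock_Kurzweil_Integration.integral_combine[where f=\<phi> and a=0 and c=s and b="s+\<delta>"] intg[of 0 "s+\<delta>"] s \<delta> by simp
    moreover have "integral {s..s+\<delta>} \<phi> = integral {0..\<delta>} (\<lambda>x. \<phi> (x + s))"
      using integral_shift_real_ivl[of s s "s+\<delta>" \<phi>] by simp
    moreover have "integral {0..\<delta>} (\<lambda>x. \<phi> (x + s)) = integral {0..\<delta>} (\<lambda>x. \<phi> s * \<phi> x)"
      by (rule integral_cong) (metis mult s add.commute atLeastAtMost_iff)
    moreover have "integral {0..\<delta>} (\<lambda>x. \<phi> s * \<phi> x) = \<phi> s * c"
      unfolding c_def \<Phi>_def by (simp add: integral_mult_right)
    ultimately show ?thesis unfolding \<Phi>_def by simp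
  qed
  have c0: "c \<noteq> 0" using \<delta> c_def by simp
  have Dd: "((\<lambda>h. (\<Phi> (\<delta>+h) - \<Phi> \<delta>)/of_real h) \<longlongrightarrow> \<phi> \<delta>) (at_right 0)"
    using vd_right[OF D[of \<delta>]] \<delta> by simp
  define d where "d = (\<phi> \<delta> - 1) / c"
  have "((\<lambda>h. ((\<Phi> (\<delta>+h) - \<Phi> \<delta>)/of_real h - (\<Phi> h - \<Phi> 0)/of_real h) / c) \<longlongrightarrow> (\<phi> \<delta> - 1) / c) (at_right 0)"
    by (intro tendsto_divide tendsto_diff Dd D0 tendsto_const c0)
  moreover have "eventually (\<lambda>h. ((\<Phi> (\<delta>+h) - \<Phi> \<delta>)/of_real h - (\<Phi> h - \<Phi> 0)/of_real h) / c = (\<phi> h - 1) / of_real h) (at_right 0)"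
    using eventually_at_right_less[of "0::real"]
  proof eventually_elim
    case (elim h)
    have "\<Phi> (h+\<delta>) - \<Phi> h = \<phi> h * c" using shift[of h] elim by simp
    moreover have "\<Phi> (0+\<delta>) - \<Phi> 0 = \<phi> 0 * c" using shift[of 0] by simp
    ultimately show ?case using c0 elim one by (simp add: field_simps add.commute)
  qed
  ultimately have lim_d: "((\<lambda>h. (\<phi> h - 1) / of_real h) \<longlongrightarrow> d) (at_right 0)"
    unfolding d_def by (simp add: tendsto_cong)
  define q where "q h = (\<phi> h - 1) / of_real h" for h
  have "((\<lambda>h. Re (q h)) \<longlongrightarrow> Re d) (at_right 0)" unfolding q_def by (intro tendsto_Re lim_d)
  moreover have "((\<lambda>h. -(h/2) * (cmod (q h))^2) \<longlongrightarrow> -(0/2) * (cmod d)^2) (at_right 0)"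
    unfolding q_def by (intro tendsto_intros lim_d) auto
  moreover have "eventually (\<lambda>h. -(h/2) * (cmod (q h))^2 = Re (q h)) (at_right 0)"
    using eventually_at_right_less[of "0::real"]
  proof eventually_elim
    case (elim h)
    have u: "(Re (\<phi> h))^2 + (Im (\<phi> h))^2 = 1" using unit[of h] elim cmod_power2[of "\<phi> h"] by simp
    have "cmod (q h) ^ 2 = ((Re (\<phi> h) - 1)^2 + (Im (\<phi> h))^2) / h^2"
      unfolding q_def using elim by (simp add: norm_divide cmod_power2 power_divide)
    also have "\<dots> = (2 - 2 * Re (\<phi> h)) / h^2" using u by (simp add: power2_eq_square algebra_simps)
    finally have "cmod (q h) ^ 2 = (2 - 2 * Re (\<phi> h)) / h^2" .
    moreover have "Re (q h) = (Re (\<phi> h) - 1) / h" unfolding q_def by (simp add: Re_divide_of_real)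
    ultimately have e1: "Re (\<phi> h) * 2 + h * (h * (cmod (q h) * cmod (q h))) = 2" "1 + h * Re (q h) = Re (\<phi> h)"
      using elim by (simp_all add: field_simps power2_eq_square)
    then have "h * (2 * Re (q h) + h * cmod (q h)^2) = 0" by (simp add: algebra_simps power2_eq_square)
    then have "2 * Re (q h) + h * cmod (q h)^2 = 0" using elim by simp
    then show ?case by simp
  qed
  ultimately have "Re d = 0"
    using tendsto_unique[of "at_right (0::real)" "\<lambda>h. Re (q h)" "Re d" 0]
    by (simp add: tendsto_cong)
  then have "d = \<i> * of_real (Im d)" by (simp add: complex_eq_iff)
  then show ?thesis using lim_d by metis
qed

lemma cs_facts:
  assumes "complex_structure ci"
  shows "linear ci" "\<And>x. ci (ci x) = - x" "\<And>c y. norm (cscale ci c y) = cmod c * norm y"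
  using assms unfolding complex_structure_def cscale_def by (auto simp: complex.collapse)

lemma cscale_mult:
  assumes "complex_structure ci"
  shows "cscale ci a (cscale ci b y) = cscale ci (a*b) y"
proof -
  have l: "linear ci" and cc: "ci (ci y) = - y" using cs_facts[OF assms] by auto
  show ?thesis unfolding cscale_def
    by (simp add: linear_add[OF l] linear_cmul[OF l] cc algebra_simps)
qed

lemma cscale_one[simp]: "cscale ci 1 y = y" unfolding cscale_def by simp

lemma cscale_diff: "cscale ci a y - cscale ci b y = cscale ci (a - b) y"
  unfolding cscale_def by (simp add: algebra_simps)

lemma cscale_scaleR: "r *\<^sub>R cscale ci a y = cscale ci (of_real r * a) y"
  unfolding cscale_def by (simp add: algebra_simps)

lemma f_cscale:
  assumes "dual_functional ci f"
  shows "f (cscale ci c y) = c * f y"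
proof -
  have bl: "bounded_linear f" and fi: "f (ci y) = \<i> * f y" using assms unfolding dual_functional_def by auto
  interpret bounded_linear f by (rule bl)
  have "f (cscale ci c y) = of_real (Re c) * f y + of_real (Im c) * (\<i> * f y)"
    unfolding cscale_def by (simp add: add scale scaleR_conv_of_real fi)
  also have "\<dots> = (of_real (Re c) + \<i> * of_real (Im c)) * f y" by (simp add: algebra_simps)
  also have "of_real (Re c) + \<i> * of_real (Im c) = c" by (simp add: complex_eq_iff)
  finally show ?thesis .
qed

lemma T_cscale:
  assumes "complex_bounded_linear ci L"
  shows "L (cscale ci c y) = cscale ci c (L y)"
proof -
  have bl: "bounded_linear L" and li: "\<And>y. L (ci y) = ci (L y)" using assms unfolding complex_bounded_linear_def by auto
  interpret bounded_linear L by (rule bl)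
  show ?thesis unfolding cscale_def by (simp add: add scale li)
qed

theorem theorem3:
  fixes ci :: "'a::banach \<Rightarrow> 'a"
    and J :: "'a \<Rightarrow> 'a \<Rightarrow> complex"
    and T :: "real \<Rightarrow> 'a \<Rightarrow> 'a"
    and x :: 'a
  assumes "complex_structure ci"
    and "strictly_convex TYPE('a)"
    and "duality_section ci J"
    and "norm x = 1"
    and "C0_contraction_semigroup ci T"
    and "((\<lambda>t. cmod (J x (T t x))) \<longlongrightarrow> 1) at_top"
  shows "\<exists>lam::real. generator_graph T x (cscale ci (\<i> * complex_of_real lam) x)"
proof -
  note cs = cs_facts[OF assms(1)]
  define f where "f = J x"
  have dual: "is_dual_to ci f x" using assms(3) unfolding duality_section_def f_def by auto
  have df: "dual_functional ci f" using dual is_dual_to_def by auto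
  have blf: "bounded_linear f" using df dual_functional_def by auto
  have of1: "onorm f = 1"
  proof -
    have "(onorm f)^2 = 1" using dual assms(4) unfolding is_dual_to_def by simp
    moreover have "onorm f \<ge> 0" using onorm_pos_le[OF blf] .
    ultimately show ?thesis by (simp add: power2_eq_1_iff)
  qed
  have fx: "f x = 1" using dual assms(4) of1 unfolding is_dual_to_def by simp
  have fle: "cmod (f y) \<le> norm y" for y using onorm[OF blf, of y] of1 by simp
  have Tcbl: "\<And>t. t\<ge>0 \<Longrightarrow> complex_bounded_linear ci (T t)"
    and T0: "T 0 = id"
    and Tadd: "\<And>s t. s\<ge>0 \<Longrightarrow> t\<ge>0 \<Longrightarrow> T (s+t) = T s \<circ> T t"
    and Tlim: "\<And>y. ((\<lambda>t. T t y) \<longlongrightarrow> y) (at_right 0)"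
    and Tn: "\<And>t. t\<ge>0 \<Longrightarrow> onorm (T t) \<le> 1"
    using assms(5) unfolding C0_contraction_semigroup_def by auto
  have Tbl: "bounded_linear (T t)" if "t \<ge> 0" for t
    using Tcbl[OF that] unfolding complex_bounded_linear_def by auto
  have Tle: "norm (T t y) \<le> norm y" if "t \<ge> 0" for t y
  proof -
    have "norm (T t y) \<le> onorm (T t) * norm y" by (rule onorm[OF Tbl[OF that]])
    also have "\<dots> \<le> 1 * norm y" by (rule mult_right_mono[OF Tn[OF that]]) simp
    finally show ?thesis by simp
  qed
  define \<phi> where "\<phi> t = f (T t x)" for t
  have lim1: "((\<lambda>t. cmod (\<phi> t)) \<longlongrightarrow> 1) at_top" using assms(6) unfolding f_def \<phi>_def .
  have eig: "T s x = cscale ci (\<phi> s) x \<and> cmod (\<phi> s) = 1" if s: "s \<ge> 0" for s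
  proof -
    define w where "w = T s x"
    define g where "g c = norm (x + cscale ci c w)" for c
    have gcont: "continuous_on (sphere 0 1) g" unfolding g_def cscale_def by (intro continuous_intros)
    have ne: "sphere (0::complex) 1 \<noteq> {}" by (metis empty_iff mem_sphere_0 norm_one) 
    obtain c0 where c0: "c0 \<in> sphere (0::complex) 1" "\<And>c. c \<in> sphere 0 1 \<Longrightarrow> g c \<le> g c0"
      using continuous_attains_sup[OF compact_sphere ne gcont] by blast
    have key: "cmod (\<phi> t) + cmod (\<phi> (s + t)) \<le> g c0" if t: "t \<ge> 0" "\<phi> t \<noteq> 0" "\<phi> (s + t) \<noteq> 0" for t
    proof -
      define a where "a = \<phi> t"
      define b where "b = \<phi> (s + t)"
      have a0: "a \<noteq> 0" and b0: "b \<noteq> 0" using t a_def b_def by auto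
      define cn where "cn = (a / of_real (cmod a)) * (cnj b / of_real (cmod b))"
      have cn1: "cn \<in> sphere 0 1" unfolding cn_def using a0 b0 by (simp add: norm_mult norm_divide)
      have bb: "cnj b * b = of_real (cmod b ^ 2)" using complex_norm_square[of b] by (simp add: mult.commute)
      have "cn * b = (a / of_real (cmod a)) * (cnj b * b / of_real (cmod b))" unfolding cn_def by simp
      also have "\<dots> = (a / of_real (cmod a)) * of_real (cmod b)" using b0 unfolding bb by (simp add: power2_eq_square)
      finally have cnb: "cn * b = (a / of_real (cmod a)) * of_real (cmod b)" .
      have "a + cn * b = (a / of_real (cmod a)) * of_real (cmod a + cmod b)"
        unfolding cnb using a0 by (simp add: field_simps)
      then have "cmod (a + cn * b) = cmod (a / of_real (cmod a)) * cmod (of_real (cmod a + cmod b) :: complex)"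
        by (simp only: norm_mult)
      moreover have "cmod (of_real (cmod a + cmod b) :: complex) = cmod a + cmod b" by (simp only: norm_of_real) simp
      moreover have "cmod (a / of_real (cmod a)) = 1" using a0 by (simp add: norm_divide)
      ultimately have n1: "cmod (a + cn * b) = cmod a + cmod b" by simp
      define u where "u = x + cscale ci cn w"
      have "T t u = T t x + cscale ci cn (T (s + t) x)"
        unfolding u_def w_def using Tadd[OF t(1) s, unfolded add.commute[of t s]] T_cscale[OF Tcbl[OF t(1)]] linear_add[OF bounded_linear.linear[OF Tbl[OF t(1)]]]
        by simp
      then have "f (T t u) = a + cn * b"
        unfolding a_def b_def \<phi>_def using f_cscale[OF df] linear_add[OF bounded_linear.linear[OF blf]] by simp
      then have "cmod a + cmod b = cmod (f (T t u))" using n1 by simp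
      also have "\<dots> \<le> norm (T t u)" by (rule fle)
      also have "\<dots> \<le> norm u" by (rule Tle[OF t(1)])
      also have "\<dots> = g cn" unfolding u_def g_def ..
      also have "\<dots> \<le> g c0" by (rule c0(2)[OF cn1])
      finally show ?thesis unfolding a_def b_def .
    qed
    have lim2: "((\<lambda>t. cmod (\<phi> (s + t))) \<longlongrightarrow> 1) at_top"
      by (rule filterlim_compose[OF lim1 filterlim_tendsto_add_at_top[OF tendsto_const filterlim_ident]])
    have ev1: "eventually (\<lambda>t. cmod (\<phi> t) > 1/2) at_top" using order_tendstoD(1)[OF lim1, of "1/2"] by simp
    have ev2: "eventually (\<lambda>t. cmod (\<phi> (s + t)) > 1/2) at_top" using order_tendstoD(1)[OF lim2, of "1/2"] by simp
    have "eventually (\<lambda>t. cmod (\<phi> t) + cmod (\<phi> (s + t)) \<le> g c0) at_top"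
      using ev1 ev2 eventually_ge_at_top[of 0]
    proof eventually_elim
      case (elim t) then show ?case by (intro key) auto
    qed
    moreover have "((\<lambda>t. cmod (\<phi> t) + cmod (\<phi> (s + t))) \<longlongrightarrow> 1 + 1) at_top"
      by (intro tendsto_add lim1 lim2)
    ultimately have g2: "2 \<le> g c0" by (metis one_add_one tendsto_upperbound trivial_limit_at_top_linorder)
    define v where "v = cscale ci c0 w"
    have nv: "norm v \<le> 1" unfolding v_def using cs(3) c0(1) Tle[OF s, of x] assms(4) w_def by simp
    have "g c0 \<le> norm x + norm v" unfolding g_def v_def by (rule norm_triangle_ineq)
    then have nv1: "norm v = 1" and nxv: "norm (x + v) = 2" using g2 nv assms(4) unfolding g_def v_def by auto
    have xv: "x = v" using assms(2) assms(4) nv1 nxv unfolding strictly_convex_def by force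
    have cc: "cnj c0 * c0 = 1"
      using complex_norm_square[of c0] c0(1) by (simp add: mult.commute)
    have wx: "w = cscale ci (cnj c0) x"
      unfolding xv v_def cscale_mult[OF assms(1)] cc by simp
    have "\<phi> s = cnj c0" unfolding \<phi>_def w_def[symmetric] wx f_cscale[OF df] fx by simp
    then show ?thesis using wx c0(1) w_def by simp
  qed
  have one: "\<phi> 0 = 1" unfolding \<phi>_def T0 using fx by simp
  have mult: "\<phi> (s + t) = \<phi> s * \<phi> t" if "s \<ge> 0" "t \<ge> 0" for s t
  proof -
    have "T (s + t) x = T s (cscale ci (\<phi> t) x)" using Tadd[OF that] eig[OF that(2)] by simp
    also have "\<dots> = cscale ci (\<phi> t) (T s x)" by (rule T_cscale[OF Tcbl[OF that(1)]])
    finally show ?thesis unfolding \<phi>_def using f_cscale[OF df] by (simp add: mult.commute)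
  qed
  have unit: "cmod (\<phi> s) = 1" if "s \<ge> 0" for s using eig[OF that] by simp
  have lim: "(\<phi> \<longlongrightarrow> 1) (at_right 0)"
    unfolding \<phi>_def using bounded_linear.tendsto[OF blf Tlim[of x]] fx by simp
  obtain lam where lam: "((\<lambda>h. (\<phi> h - 1) / of_real h) \<longlongrightarrow> \<i> * of_real lam) (at_right 0)"
    using mult_hom_deriv[OF one mult unit lim] by blast
  have "((\<lambda>h. cscale ci ((\<phi> h - 1) / of_real h) x) \<longlongrightarrow> cscale ci (\<i> * of_real lam) x) (at_right 0)"
    unfolding cscale_def by (intro tendsto_intros tendsto_Re tendsto_Im lam)
  moreover have "eventually (\<lambda>h. cscale ci ((\<phi> h - 1) / of_real h) x = inverse h *\<^sub>R (T h x - x)) (at_right 0)"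
    using eventually_at_right_less[of "0::real"]
  proof eventually_elim
    case (elim h)
    have "inverse h *\<^sub>R (T h x - x) = inverse h *\<^sub>R (cscale ci (\<phi> h) x - cscale ci 1 x)"
      using eig[of h] elim by simp
    also have "\<dots> = cscale ci (of_real (inverse h) * (\<phi> h - 1)) x" by (simp only: cscale_diff cscale_scaleR)
    also have "of_real (inverse h) * (\<phi> h - 1) = (\<phi> h - 1) / of_real h" by (simp add: divide_inverse mult.commute)
    finally show ?case by simp
  qed
  ultimately have "generator_graph T x (cscale ci (\<i> * complex_of_real lam) x)"
    unfolding generator_graph_def by (simp add: tendsto_cong)
  then show ?thesis by blast
qed

end
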